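(* For every $n\in\mathbb{Z}^+$ we have $$N(1,1,6;2n)=N(1,1,3;n),\qquad t(1,1,6;8n+4)=2t(1,1,3;n),\qquad t(1,1,6;32n+19)=4t(1,1,3;n).$$ Moreover, for every $n\in\mathbb{Z}^+$ with $n\not\equiv 15\pmod{16}$ we have $$t(1,1,6;n)=\begin{cases} 4N(1,1,3;n+1)&\text{if } n\equiv 1,2\pmod 4,\\ 2N(1,1,3;n+1)&\text{if } n\equiv 0\pmod 8,\\ N(1,1,3;n+1)&\text{if } n\equiv 4\pmod 8 \text{ or } n\equiv 19\pmod{32},\\ \frac 85N(1,1,3;n+1)&\text{if } n\equiv 7,11\pmod{16},\\ \frac 43N(1,1,3;n+1)&\text{if } n\equiv 3\pmod{32}.\end{cases}$$
   Context: $\mathbb{Z}^+$ is the set of positive integers. For $a,b,c\in\mathbb{Z}^+$ and nonnegative integer $n$, $N(a,b,c;n)$ denotes the number of triples $(x,y,z)\in\mathbb{Z}^3$ with $n=ax^2+by^2+cz^2$, and $t(a,b,c;n)$ denotes the number of triples $(x,y,z)\in\mathbb{Z}^3$ with $n=a\frac{x(x+1)}2+b\frac{y(y+1)}2+c\frac{z(z+1)}2$. *)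

theory Defs
  imports Complex_Main
begin

definition N :: "int \<Rightarrow> int \<Rightarrow> int \<Rightarrow> int \<Rightarrow> nat" where
  "N a b c n = card {(x::int, y::int, z::int). n = a * x^2 + b * y^2 + c * z^2}"

definition t :: "int \<Rightarrow> int \<Rightarrow> int \<Rightarrow> int \<Rightarrow> nat" where
  "t a b c n = card {(x::int, y::int, z::int).
     n = a * (x * (x + 1) div 2) + b * (y * (y + 1) div 2) + c * (z * (z + 1) div 2)}"

end

theory Submission
  imports Defs
begin


definition S :: "int \<Rightarrow> (int \<times> int \<times> int) set" where
  "S n = {(x,y,z). n = x^2 + y^2 + 3*z^2}"

lemma sq_mod: "(x::int)^2 mod 8 = (if odd x then 1 else if even (x div 2) then 0 else 4)"
proof -
  have "x^2 mod 8 = ((x mod 8)^2) mod 8" by (simp add: power_mod)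
  moreover have "x mod 8 \<in> {0,1,2,3,4,5,6,7}" by auto
  moreover have "odd x = odd (x mod 8)" by presburger
  moreover have "even (x div 2) = even ((x mod 8) div 2)" by presburger
  ultimately show ?thesis by auto
qed

lemma sq_mod8_odd: "odd (x::int) \<Longrightarrow> x^2 mod 8 = 1"
  using sq_mod[of x] by simp

lemma sq_mod8_even: "even (x::int) \<Longrightarrow> x^2 mod 8 = 0 \<or> x^2 mod 8 = 4"
  using sq_mod[of x] by (simp split: if_splits)

lemma S_bound: "(x,y,z) \<in> S n \<Longrightarrow> \<bar>x\<bar> \<le> \<bar>n\<bar> \<and> \<bar>y\<bar> \<le> \<bar>n\<bar> \<and> \<bar>z\<bar> \<le> \<bar>n\<bar>"
proof -
  assume "(x,y,z) \<in> S n"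
  then have e: "n = x^2 + y^2 + 3*z^2" by (simp add: S_def)
  have a: "\<bar>u\<bar> \<le> u^2" for u :: int
  proof (cases "u = 0")
    case False
    then have "\<bar>u\<bar> * 1 \<le> \<bar>u\<bar> * \<bar>u\<bar>" by (intro mult_left_mono) auto
    then show ?thesis by (simp add: power2_eq_square abs_mult_self_eq)
  qed simp
  show ?thesis using a[of x] a[of y] a[of z] e by (smt (verit) zero_le_power2)
qed

lemma S_fin: "finite (S n)"
proof -
  have "S n \<subseteq> {-\<bar>n\<bar>..\<bar>n\<bar>} \<times> {-\<bar>n\<bar>..\<bar>n\<bar>} \<times> {-\<bar>n\<bar>..\<bar>n\<bar>}"
    using S_bound by fastforce
  then show ?thesis by (rule finite_subset) auto
qed

lemma N113: "N 1 1 3 n = card (S n)"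
  unfolding N_def S_def by simp



definition SP :: "int \<Rightarrow> (int \<Rightarrow> int \<Rightarrow> int \<Rightarrow> bool) \<Rightarrow> (int \<times> int \<times> int) set" where
  "SP n P = {(x,y,z). n = x^2 + y^2 + 3*z^2 \<and> P x y z}"

definition C :: "int \<Rightarrow> (int \<Rightarrow> int \<Rightarrow> int \<Rightarrow> bool) \<Rightarrow> nat" where
  "C n P = card (SP n P)"

lemma card_wit:
  assumes "\<And>a. a \<in> A \<Longrightarrow> g (f a) = a" "\<And>b. b \<in> B \<Longrightarrow> f (g b) = b"
    "\<And>a. a \<in> A \<Longrightarrow> f a \<in> B" "\<And>b. b \<in> B \<Longrightarrow> g b \<in> A"
  shows "card A = card B"
proof -
  have "bij_betw f A B" by (rule bij_betw_byWitness[where f'=g]) (use assms in auto)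
  then show ?thesis by (rule bij_betw_same_card)
qed

lemma SP_fin: "finite (SP n P)"
  by (rule finite_subset[OF _ S_fin[of n]]) (auto simp: SP_def S_def)

lemma C_True: "C n (\<lambda>x y z. True) = card (S n)"
  by (simp add: C_def SP_def S_def)

lemma C_cong: "(\<And>x y z. n = x^2 + y^2 + 3*z^2 \<Longrightarrow> P x y z = Q x y z) \<Longrightarrow> C n P = C n Q"
  unfolding C_def SP_def by (rule arg_cong[where f=card]) auto

lemma C_split: "C n P = C n (\<lambda>x y z. P x y z \<and> Q x y z) + C n (\<lambda>x y z. P x y z \<and> \<not> Q x y z)"
proof -
  have "SP n P = SP n (\<lambda>x y z. P x y z \<and> Q x y z) \<union> SP n (\<lambda>x y z. P x y z \<and> \<not> Q x y z)"
    by (auto simp: SP_def)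
  moreover have "SP n (\<lambda>x y z. P x y z \<and> Q x y z) \<inter> SP n (\<lambda>x y z. P x y z \<and> \<not> Q x y z) = {}"
    by (auto simp: SP_def)
  ultimately show ?thesis unfolding C_def by (simp add: card_Un_disjoint SP_fin)
qed

lemma C_empty: "(\<And>x y z. n = x^2 + y^2 + 3*z^2 \<Longrightarrow> \<not> P x y z) \<Longrightarrow> C n P = 0"
proof -
  assume h: "\<And>x y z. n = x^2 + y^2 + 3*z^2 \<Longrightarrow> \<not> P x y z"
  have "SP n P = {}" using h by (auto simp: SP_def)
  then show ?thesis by (simp add: C_def)
qed

lemma C_swap: "C n P = C n (\<lambda>x y z. P y x z)"
  unfolding C_def
  by (rule card_wit[where f="\<lambda>(x,y,z). (y,x,z)" and g="\<lambda>(x,y,z). (y,x,z)"])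
     (auto simp: SP_def)

lemma C_half: "C (4*m) (\<lambda>x y z. even x \<and> even y \<and> even z \<and> Q (x div 2) (y div 2) (z div 2)) = C m Q"
  unfolding C_def
proof (rule card_wit[where f="\<lambda>(x,y,z). (x div 2, y div 2, z div 2)" and g="\<lambda>(x,y,z). (2*x,2*y,2*z)"])
  fix a assume "a \<in> SP (4 * m) (\<lambda>x y z. even x \<and> even y \<and> even z \<and> Q (x div 2) (y div 2) (z div 2))"
  then obtain x y z where a: "a = (x,y,z)" "4*m = x^2+y^2+3*z^2" "even x" "even y" "even z" "Q (x div 2) (y div 2) (z div 2)"
    by (auto simp: SP_def)
  then obtain p q r where "x = 2*p" "y = 2*q" "z = 2*r" by (auto elim!: evenE)
  with a show "(\<lambda>(x, y, z). (2 * x, 2 * y, 2 * z)) ((\<lambda>(x, y, z). (x div 2, y div 2, z div 2)) a) = a"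
    "(\<lambda>(x, y, z). (x div 2, y div 2, z div 2)) a \<in> SP m Q"
    by (auto simp: SP_def power_mult_distrib)
next
  fix b assume "b \<in> SP m Q"
  then obtain x y z where a: "b = (x,y,z)" "m = x^2+y^2+3*z^2" "Q x y z"
    by (auto simp: SP_def)
  then show "(\<lambda>(x, y, z). (x div 2, y div 2, z div 2)) ((\<lambda>(x, y, z). (2 * x, 2 * y, 2 * z)) b) = b"
    "(\<lambda>(x, y, z). (2 * x, 2 * y, 2 * z)) b \<in> SP (4 * m) (\<lambda>x y z. even x \<and> even y \<and> even z \<and> Q (x div 2) (y div 2) (z div 2))"
    by (auto simp: SP_def power_mult_distrib)
qed



lemma K1: "C n (\<lambda>x y z. (P x \<and> odd y \<and> odd z) \<and> even ((y+z) div 2))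
   = C n (\<lambda>x y z. P x \<and> even y \<and> even z \<and> (y^2+3*z^2) mod 8 = 4)"
  unfolding C_def
proof (rule card_wit[where f="\<lambda>(x,y,z). (x, (y-3*z) div 2, (y+z) div 2)"
        and g="\<lambda>(x,u,v). (x, (u+3*v) div 2, (v-u) div 2)"])
  fix t assume "t \<in> SP n (\<lambda>x y z. (P x \<and> odd y \<and> odd z) \<and> even ((y+z) div 2))"
  then obtain x y z where t: "t = (x,y,z)" "n = x^2+y^2+3*z^2" "P x" "odd y" "odd z" "even ((y+z) div 2)"
    by (auto simp: SP_def)
  then obtain a c where ac: "y = 2*a+1" "z = 2*c+1" by (auto elim!: oddE)
  have e1: "(y+z) div 2 = a+c+1" using ac by simp
  have e2: "(y-3*z) div 2 = a-3*c-1" using ac by simp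
  from t(6) e1 have ev: "even (a+c+1)" by simp
  have e3: "((a-3*c-1) + 3*(a+c+1)) div 2 = y" using ac by simp
  have e4: "((a+c+1) - (a-3*c-1)) div 2 = z" using ac by simp
  have nm: "(a-3*c-1)^2 + 3*(a+c+1)^2 = y^2 + 3*z^2" using ac by (simp add: power2_eq_square algebra_simps)
  have m8: "(y^2+3*z^2) mod 8 = 4"
  proof -
    have h: "(Y::int) mod 8 = 1 \<Longrightarrow> Z mod 8 = 1 \<Longrightarrow> (Y + 3*Z) mod 8 = 4" for Y Z by presburger
    show ?thesis using h[OF sq_mod8_odd[OF t(4)] sq_mod8_odd[OF t(5)]] .
  qed
  have ev2: "even (a-3*c-1)" using ev by presburger
  show "(\<lambda>(x,u,v). (x, (u+3*v) div 2, (v-u) div 2)) ((\<lambda>(x,y,z). (x, (y-3*z) div 2, (y+z) div 2)) t) = t"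
    using t e1 e2 e3 e4 by simp
  show "(\<lambda>(x,y,z). (x, (y-3*z) div 2, (y+z) div 2)) t \<in> SP n (\<lambda>x y z. P x \<and> even y \<and> even z \<and> (y^2+3*z^2) mod 8 = 4)"
    using t e1 e2 nm m8 ev ev2 by (simp add: SP_def)
next
  fix t assume "t \<in> SP n (\<lambda>x y z. P x \<and> even y \<and> even z \<and> (y^2+3*z^2) mod 8 = 4)"
  then obtain x u v where t: "t = (x,u,v)" "n = x^2+u^2+3*v^2" "P x" "even u" "even v" "(u^2+3*v^2) mod 8 = 4"
    by (auto simp: SP_def)
  then obtain p q where pq: "u = 2*p" "v = 2*q" by (auto elim!: evenE)
  have "(u^2+3*v^2) = 4*(p^2+3*q^2)" using pq by (simp add: power2_eq_square algebra_simps)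
  moreover have "(W::int) mod 8 = 4 \<Longrightarrow> W = 4*V \<Longrightarrow> odd V" for W V by presburger
  ultimately have "odd (p^2+3*q^2)" using t(6) by blast
  then have od: "odd (p+q)" by auto
  have e1: "(u+3*v) div 2 = p+3*q" using pq by simp
  have e2: "(v-u) div 2 = q-p" using pq by simp
  have e3: "((p+3*q) + (q-p)) div 2 = 2*q" by simp
  have e4: "((p+3*q) - 3*(q-p)) div 2 = 2*p" by simp
  have nm: "(p+3*q)^2 + 3*(q-p)^2 = u^2 + 3*v^2" using pq by (simp add: power2_eq_square algebra_simps)
  have o1: "odd (p+3*q)" "odd (q-p)" using od by presburger+
  show "(\<lambda>(x,y,z). (x, (y-3*z) div 2, (y+z) div 2)) ((\<lambda>(x,u,v). (x, (u+3*v) div 2, (v-u) div 2)) t) = t"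
    using t e1 e2 e3 e4 pq by simp
  show "(\<lambda>(x,u,v). (x, (u+3*v) div 2, (v-u) div 2)) t \<in> SP n (\<lambda>x y z. (P x \<and> odd y \<and> odd z) \<and> even ((y+z) div 2))"
    using t e1 e2 e3 nm o1 by (simp add: SP_def)
qed

lemma K2: "C n (\<lambda>x y z. (P x \<and> odd y \<and> odd z) \<and> odd ((y+z) div 2))
   = C n (\<lambda>x y z. P x \<and> even y \<and> even z \<and> (y^2+3*z^2) mod 8 = 4)"
  unfolding C_def
proof (rule card_wit[where f="\<lambda>(x,y,z). (x, (y+3*z) div 2, (z-y) div 2)"
        and g="\<lambda>(x,u,v). (x, (u-3*v) div 2, (u+v) div 2)"])
  fix t assume "t \<in> SP n (\<lambda>x y z. (P x \<and> odd y \<and> odd z) \<and> odd ((y+z) div 2))"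
  then obtain x y z where t: "t = (x,y,z)" "n = x^2+y^2+3*z^2" "P x" "odd y" "odd z" "odd ((y+z) div 2)"
    by (auto simp: SP_def)
  then obtain a c where ac: "y = 2*a+1" "z = 2*c+1" by (auto elim!: oddE)
  have e1: "(y+z) div 2 = a+c+1" using ac by simp
  have e2: "(y+3*z) div 2 = a+3*c+2" "(z-y) div 2 = c-a" using ac by simp_all
  from t(6) e1 have ev: "odd (a+c+1)" by simp
  have e3: "((a+3*c+2) - 3*(c-a)) div 2 = y" using ac by simp
  have e4: "((a+3*c+2) + (c-a)) div 2 = z" using ac by simp
  have nm: "(a+3*c+2)^2 + 3*(c-a)^2 = y^2 + 3*z^2" using ac by (simp add: power2_eq_square algebra_simps)
  have m8: "(y^2+3*z^2) mod 8 = 4"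
  proof -
    have h: "(Y::int) mod 8 = 1 \<Longrightarrow> Z mod 8 = 1 \<Longrightarrow> (Y + 3*Z) mod 8 = 4" for Y Z by presburger
    show ?thesis using h[OF sq_mod8_odd[OF t(4)] sq_mod8_odd[OF t(5)]] .
  qed
  have ev2: "even (a+3*c+2)" "even (c-a)" using ev by presburger+
  show "(\<lambda>(x,u,v). (x, (u-3*v) div 2, (u+v) div 2)) ((\<lambda>(x,y,z). (x, (y+3*z) div 2, (z-y) div 2)) t) = t"
    using t e1 e2 e3 e4 by simp
  show "(\<lambda>(x,y,z). (x, (y+3*z) div 2, (z-y) div 2)) t \<in> SP n (\<lambda>x y z. P x \<and> even y \<and> even z \<and> (y^2+3*z^2) mod 8 = 4)"
    using t e1 e2 nm m8 ev ev2 by (simp add: SP_def)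
next
  fix t assume "t \<in> SP n (\<lambda>x y z. P x \<and> even y \<and> even z \<and> (y^2+3*z^2) mod 8 = 4)"
  then obtain x u v where t: "t = (x,u,v)" "n = x^2+u^2+3*v^2" "P x" "even u" "even v" "(u^2+3*v^2) mod 8 = 4"
    by (auto simp: SP_def)
  then obtain p q where pq: "u = 2*p" "v = 2*q" by (auto elim!: evenE)
  have "(u^2+3*v^2) = 4*(p^2+3*q^2)" using pq by (simp add: power2_eq_square algebra_simps)
  moreover have "(W::int) mod 8 = 4 \<Longrightarrow> W = 4*V \<Longrightarrow> odd V" for W V by presburger
  ultimately have "odd (p^2+3*q^2)" using t(6) by blast
  then have od: "odd (p+q)" by auto
  have e1: "(u-3*v) div 2 = p-3*q" using pq by simp
  have e2: "(u+v) div 2 = p+q" using pq by simp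
  have e3: "((p-3*q) + (p+q)) div 2 = p-q" by simp
  have e4: "((p-3*q) + 3*(p+q)) div 2 = 2*p" "((p+q) - (p-3*q)) div 2 = 2*q" by simp_all
  have nm: "(p-3*q)^2 + 3*(p+q)^2 = u^2 + 3*v^2" using pq by (simp add: power2_eq_square algebra_simps)
  have o1: "odd (p-3*q)" "odd (p+q)" "odd (p-q)" using od by presburger+
  show "(\<lambda>(x,y,z). (x, (y+3*z) div 2, (z-y) div 2)) ((\<lambda>(x,u,v). (x, (u-3*v) div 2, (u+v) div 2)) t) = t"
    using t e1 e2 e3 e4 pq by simp
  show "(\<lambda>(x,u,v). (x, (u-3*v) div 2, (u+v) div 2)) t \<in> SP n (\<lambda>x y z. (P x \<and> odd y \<and> odd z) \<and> odd ((y+z) div 2))"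
    using t e1 e2 e3 nm o1 by (simp add: SP_def)
qed

lemma C_K: "C n (\<lambda>x y z. P x \<and> odd y \<and> odd z)
   = 2 * C n (\<lambda>x y z. P x \<and> even y \<and> even z \<and> (y^2+3*z^2) mod 8 = 4)"
  using C_split[of n "\<lambda>x y z. P x \<and> odd y \<and> odd z" "\<lambda>x y z. even ((y+z) div 2)"] K1[of n P] K2[of n P]
  by simp


lemma sqf: "(odd (x::int) \<longrightarrow> x^2 mod 8 = 1) \<and> (even x \<longrightarrow> x^2 mod 4 = 0)"
  using sq_mod[of x] by (auto split: if_splits)

lemma cl4: "n = X+Y+3*(Z::int) \<Longrightarrow> (px \<longrightarrow> X mod 8 = 1) \<Longrightarrow> (\<not>px \<longrightarrow> X mod 4 = 0)
  \<Longrightarrow> (py \<longrightarrow> Y mod 8 = 1) \<Longrightarrow> (\<not>py \<longrightarrow> Y mod 4 = 0)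
  \<Longrightarrow> (pz \<longrightarrow> Z mod 8 = 1) \<Longrightarrow> (\<not>pz \<longrightarrow> Z mod 4 = 0) \<Longrightarrow> n mod 4 = 0
  \<Longrightarrow> (px \<and> \<not>py \<and> pz) \<or> (\<not>px \<and> py \<and> pz) \<or> (\<not>px \<and> \<not>py \<and> \<not>pz)"
  by (cases px; cases py; cases pz; simp; presburger)
lemma cl2: "n = X+Y+3*(Z::int) \<Longrightarrow> (px \<longrightarrow> X mod 8 = 1) \<Longrightarrow> (\<not>px \<longrightarrow> X mod 4 = 0)
  \<Longrightarrow> (py \<longrightarrow> Y mod 8 = 1) \<Longrightarrow> (\<not>py \<longrightarrow> Y mod 4 = 0)
  \<Longrightarrow> (pz \<longrightarrow> Z mod 8 = 1) \<Longrightarrow> (\<not>pz \<longrightarrow> Z mod 4 = 0) \<Longrightarrow> n mod 4 = 2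
  \<Longrightarrow> px \<and> py \<and> \<not>pz"
  by (cases px; cases py; cases pz; simp; presburger)
lemma cl3: "n = X+Y+3*(Z::int) \<Longrightarrow> (px \<longrightarrow> X mod 8 = 1) \<Longrightarrow> (\<not>px \<longrightarrow> X mod 4 = 0)
  \<Longrightarrow> (py \<longrightarrow> Y mod 8 = 1) \<Longrightarrow> (\<not>py \<longrightarrow> Y mod 4 = 0)
  \<Longrightarrow> (pz \<longrightarrow> Z mod 8 = 1) \<Longrightarrow> (\<not>pz \<longrightarrow> Z mod 4 = 0) \<Longrightarrow> n mod 4 = 3
  \<Longrightarrow> \<not>px \<and> \<not>py \<and> pz"
  by (cases px; cases py; cases pz; simp; presburger)
lemma cl1: "n = X+Y+3*(Z::int) \<Longrightarrow> (px \<longrightarrow> X mod 8 = 1) \<Longrightarrow> (\<not>px \<longrightarrow> X mod 4 = 0)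
  \<Longrightarrow> (py \<longrightarrow> Y mod 8 = 1) \<Longrightarrow> (\<not>py \<longrightarrow> Y mod 4 = 0)
  \<Longrightarrow> (pz \<longrightarrow> Z mod 8 = 1) \<Longrightarrow> (\<not>pz \<longrightarrow> Z mod 4 = 0) \<Longrightarrow> n mod 8 = 1
  \<Longrightarrow> (px \<and> \<not>py \<and> \<not>pz) \<or> (\<not>px \<and> py \<and> \<not>pz)"
  by (cases px; cases py; cases pz; simp; presburger)
lemma cl5: "n = X+Y+3*(Z::int) \<Longrightarrow> (px \<longrightarrow> X mod 8 = 1) \<Longrightarrow> (\<not>px \<longrightarrow> X mod 4 = 0)
  \<Longrightarrow> (py \<longrightarrow> Y mod 8 = 1) \<Longrightarrow> (\<not>py \<longrightarrow> Y mod 4 = 0)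
  \<Longrightarrow> (pz \<longrightarrow> Z mod 8 = 1) \<Longrightarrow> (\<not>pz \<longrightarrow> Z mod 4 = 0) \<Longrightarrow> n mod 8 = 5
  \<Longrightarrow> ((px \<and> \<not>py \<and> \<not>pz) \<or> (\<not>px \<and> py \<and> \<not>pz) \<or> (px \<and> py \<and> pz)) \<and> (px \<and> \<not>py \<longrightarrow> (Y+3*Z) mod 8 = 4)"
  by (cases px; cases py; cases pz; simp; presburger)

lemma pat: assumes e: "n = x^2+y^2+3*(z::int)^2" shows
 "(n mod 4 = 0 \<longrightarrow> (odd x \<and> even y \<and> odd z) \<or> (even x \<and> odd y \<and> odd z) \<or> (even x \<and> even y \<and> even z))
 \<and> (n mod 4 = 2 \<longrightarrow> odd x \<and> odd y \<and> even z) \<and> (n mod 4 = 3 \<longrightarrow> even x \<and> even y \<and> odd z)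
 \<and> (n mod 8 = 1 \<longrightarrow> (odd x \<and> even y \<and> even z) \<or> (even x \<and> odd y \<and> even z))
 \<and> (n mod 8 = 5 \<longrightarrow> ((odd x \<and> even y \<and> even z) \<or> (even x \<and> odd y \<and> even z) \<or> (odd x \<and> odd y \<and> odd z))
      \<and> (odd x \<and> even y \<longrightarrow> (y^2+3*z^2) mod 8 = 4))"
proof -
  have h: "odd x \<longrightarrow> x^2 mod 8 = 1" "\<not> odd x \<longrightarrow> x^2 mod 4 = 0"
    "odd y \<longrightarrow> y^2 mod 8 = 1" "\<not> odd y \<longrightarrow> y^2 mod 4 = 0"
    "odd z \<longrightarrow> z^2 mod 8 = 1" "\<not> odd z \<longrightarrow> z^2 mod 4 = 0"
    using sqf[of x] sqf[of y] sqf[of z] by auto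
  have e': "n = x^2+y^2+3*z^2" by (rule e)
  note c4 = cl4[OF e' h] and c2 = cl2[OF e' h] and c3 = cl3[OF e' h] and c1 = cl1[OF e' h] and c5 = cl5[OF e' h]
  show ?thesis using c4 c2 c3 c1 c5 by (simp add: add.assoc)
qed

definition M :: "int \<Rightarrow> nat" where "M m = C m (\<lambda>x y z. odd (y^2+3*z^2))"

lemma ev_half: "even (y::int) \<Longrightarrow> even (z::int) \<Longrightarrow> ((y^2+3*z^2) mod 8 = 4) = odd ((y div 2)^2+3*(z div 2)^2)"
proof -
  assume "even y" "even z"
  then obtain q r where qr: "y = 2*q" "z = 2*r" by (auto elim!: evenE)
  have A: "y^2+3*z^2 = 4*(q^2+3*r^2)" using qr by (simp add: power2_eq_square algebra_simps)
  have B: "y div 2 = q" "z div 2 = r" using qr by simp_all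
  have W: "((4*W) mod 8 = 4) = odd (W::int)" for W by presburger
  show ?thesis unfolding A B by (rule W)
qed

lemma LCy: "C (4*m) (\<lambda>x y z. odd y) = 2 * M m"
proof -
  have "C (4*m) (\<lambda>x y z. odd y) = C (4*m) (\<lambda>x y z. (\<lambda>_. True) x \<and> odd y \<and> odd z)"
    apply (rule C_cong) subgoal premises e for x y z using pat[OF e] by auto done
  also have "\<dots> = 2 * C (4*m) (\<lambda>x y z. (\<lambda>_. True) x \<and> even y \<and> even z \<and> (y^2+3*z^2) mod 8 = 4)"
    by (rule C_K)
  also have "C (4*m) (\<lambda>x y z. (\<lambda>_. True) x \<and> even y \<and> even z \<and> (y^2+3*z^2) mod 8 = 4)
     = C (4*m) (\<lambda>x y z. even x \<and> even y \<and> even z \<and> odd ((y div 2)^2+3*(z div 2)^2))"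
    apply (rule C_cong) subgoal premises e for x y z using pat[OF e] ev_half[of y z] by auto done
  also have "\<dots> = M m" unfolding M_def by (rule C_half)
  finally show ?thesis .
qed

lemma LM4: "M (4*k) = 2 * M k"
proof -
  have "M (4*k) = C (4*k) (\<lambda>x y z. odd x)" unfolding M_def
    apply (rule C_cong) subgoal premises e for x y z using pat[OF e] by auto done
  also have "\<dots> = C (4*k) (\<lambda>x y z. odd y)" by (rule C_swap)
  finally show ?thesis using LCy by simp
qed

lemma LN4: "card (S (4*m)) = card (S m) + 4 * M m"
proof -
  have "card (S (4*m)) = C (4*m) (\<lambda>x y z. True \<and> odd x) + C (4*m) (\<lambda>x y z. True \<and> \<not> odd x)"
    using C_True[of "4*m"] C_split[of "4*m" "\<lambda>x y z. True" "\<lambda>x y z. odd x"] by simp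
  moreover have "C (4*m) (\<lambda>x y z. True \<and> odd x) = C (4*m) (\<lambda>x y z. odd y)"
    using C_swap[of "4*m" "\<lambda>x y z. odd x"] by simp
  moreover have "C (4*m) (\<lambda>x y z. True \<and> \<not> odd x) = C (4*m) (\<lambda>x y z. \<not> odd x \<and> odd y) + C (4*m) (\<lambda>x y z. \<not> odd x \<and> \<not> odd y)"
    using C_split[of "4*m" "\<lambda>x y z. \<not> odd x" "\<lambda>x y z. odd y"] by simp
  moreover have "C (4*m) (\<lambda>x y z. \<not> odd x \<and> odd y) = C (4*m) (\<lambda>x y z. odd y)"
    apply (rule C_cong) subgoal premises e for x y z using pat[OF e] by auto done
  moreover have "C (4*m) (\<lambda>x y z. \<not> odd x \<and> \<not> odd y) = C (4*m) (\<lambda>x y z. even x \<and> even y \<and> even z \<and> (\<lambda>_ _ _. True) (x div 2) (y div 2) (z div 2))"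
    apply (rule C_cong) subgoal premises e for x y z using pat[OF e] by auto done
  moreover have "\<dots> = card (S m)" using C_half[of m "\<lambda>_ _ _. True"] C_True[of m] by simp
  ultimately show ?thesis using LCy[of m] by simp
qed

lemma LM23: assumes m: "m mod 4 = 2 \<or> m mod 4 = 3" shows "M m = card (S m)"
  unfolding M_def C_True[symmetric]
  apply (rule C_cong) subgoal premises e for x y z using pat[OF e] m by auto done

lemma LM1: "m mod 8 = 1 \<Longrightarrow> card (S m) = 2 * M m"
proof -
  assume m: "m mod 8 = 1"
  have "card (S m) = C m (\<lambda>x y z. True \<and> odd x) + C m (\<lambda>x y z. True \<and> \<not> odd x)"
    using C_True[of m] C_split[of m "\<lambda>x y z. True" "\<lambda>x y z. odd x"] by simp
  moreover have "C m (\<lambda>x y z. True \<and> odd x) = C m (\<lambda>x y z. odd y)"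
    using C_swap[of m "\<lambda>x y z. odd x"] by simp
  moreover have "C m (\<lambda>x y z. odd y) = C m (\<lambda>x y z. True \<and> \<not> odd x)"
    apply (rule C_cong) subgoal premises e for x y z using pat[OF e] m by auto done
  moreover have "M m = C m (\<lambda>x y z. True \<and> \<not> odd x)" unfolding M_def
    apply (rule C_cong) subgoal premises e for x y z using pat[OF e] m by auto done
  ultimately show ?thesis by simp
qed

lemma LM5: "m mod 8 = 5 \<Longrightarrow> card (S m) = 4 * M m \<and> C m (\<lambda>x y z. odd x \<and> odd y \<and> odd z) = 2 * M m"
proof -
  assume m: "m mod 8 = 5"
  have MM: "M m = C m (\<lambda>x y z. \<not> odd x)" unfolding M_def
    apply (rule C_cong) subgoal premises e for x y z using pat[OF e] m by auto done
  have a: "C m (\<lambda>x y z. odd x \<and> odd y \<and> odd z) = 2 * C m (\<lambda>x y z. odd x \<and> even y \<and> even z \<and> (y^2+3*z^2) mod 8 = 4)"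
    by (rule C_K)
  have b: "C m (\<lambda>x y z. odd x \<and> even y \<and> even z \<and> (y^2+3*z^2) mod 8 = 4) = C m (\<lambda>x y z. odd x \<and> \<not> odd y)"
    apply (rule C_cong) subgoal premises e for x y z using pat[OF e] m by auto done
  have c: "C m (\<lambda>x y z. odd x \<and> \<not> odd y) = C m (\<lambda>x y z. odd y \<and> \<not> odd x)"
    by (rule C_swap)
  have d: "C m (\<lambda>x y z. odd y \<and> \<not> odd x) = M m" unfolding MM
    apply (rule C_cong) subgoal premises e for x y z using pat[OF e] m by auto done
  have e: "card (S m) = C m (\<lambda>x y z. True \<and> odd x) + C m (\<lambda>x y z. True \<and> \<not> odd x)"
    using C_True[of m] C_split[of m "\<lambda>x y z. True" "\<lambda>x y z. odd x"] by simp
  have f: "C m (\<lambda>x y z. True \<and> odd x) = C m (\<lambda>x y z. odd x \<and> odd y) + C m (\<lambda>x y z. odd x \<and> \<not> odd y)"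
    using C_split[of m "\<lambda>x y z. odd x" "\<lambda>x y z. odd y"] by simp
  have g: "C m (\<lambda>x y z. odd x \<and> odd y) = C m (\<lambda>x y z. odd x \<and> odd y \<and> odd z)"
    apply (rule C_cong) subgoal premises e for x y z using pat[OF e] m by auto done
  have "C m (\<lambda>x y z. True \<and> \<not> odd x) = M m" using MM by simp
  then show ?thesis using a b c d e f g by simp
qed



definition S6 :: "int \<Rightarrow> (int \<times> int \<times> int) set" where
  "S6 n = {(x,y,z). n = x^2 + y^2 + 6*z^2}"

lemma N116: "N 1 1 6 n = card (S6 n)"
  unfolding N_def S6_def by simp

lemma L116: "card (S6 (2*n)) = card (S n)"
proof (rule card_wit[where f="\<lambda>(x,y,z). ((x+y) div 2, (x-y) div 2, z)" and g="\<lambda>(a,b,c). (a+b, a-b, c)"])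
  fix t assume "t \<in> S6 (2*n)"
  then obtain x y z where t: "t = (x,y,z)" "2*n = x^2+y^2+6*z^2" by (auto simp: S6_def)
  have "even (x^2+y^2)" using t(2) by (metis add_diff_cancel_right' dvd_diff dvd_triv_left mult.assoc numeral_Bit0 mult_2 even_add)
  then have "even (x+y)" by simp
  then obtain k where k: "x + y = 2*k" by (metis evenE)
  have y: "y = 2*k - x" using k by simp
  have e1: "(x+y) div 2 = k" "(x-y) div 2 = x - k" using k y by simp_all
  have nm: "n = k^2 + (x-k)^2 + 3*z^2"
  proof -
    have "2*n = 2*(k^2 + (x-k)^2 + 3*z^2)" using t(2) y by (simp add: power2_eq_square algebra_simps)
    then show ?thesis by simp
  qed
  show "(\<lambda>(a,b,c). (a+b, a-b, c)) ((\<lambda>(x,y,z). ((x+y) div 2, (x-y) div 2, z)) t) = t"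
    using t e1 y by simp
  show "(\<lambda>(x,y,z). ((x+y) div 2, (x-y) div 2, z)) t \<in> S n"
    using t e1 nm by (simp add: S_def)
next
  fix t assume "t \<in> S n"
  then obtain a b c where t: "t = (a,b,c)" "n = a^2+b^2+3*c^2" by (auto simp: S_def)
  have e: "(a+b+(a-b)) div 2 = a" "(a+b-(a-b)) div 2 = b" by simp_all
  have "2*n = (a+b)^2 + (a-b)^2 + 6*c^2" using t(2) by (simp add: power2_eq_square algebra_simps)
  then show "(\<lambda>(x,y,z). ((x+y) div 2, (x-y) div 2, z)) ((\<lambda>(a,b,c). (a+b, a-b, c)) t) = t"
    "(\<lambda>(a,b,c). (a+b, a-b, c)) t \<in> S6 (2*n)"
    using t e by (simp_all add: S6_def)
qed

lemma tri: "(2*x+1)^2 = 8*(x*(x+1) div 2) + (1::int)"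
proof -
  have "even (x*(x+1))" by simp
  then have "x*(x+1) = 2*(x*(x+1) div 2)" by simp
  moreover have "(2*x+1)^2 = 4*(x*(x+1)) + 1" by (simp add: power2_eq_square algebra_simps)
  ultimately show ?thesis by linarith
qed

lemma odd_div: "odd (X::int) \<Longrightarrow> X = 2*(X div 2) + 1" by presburger

lemma T6_odd: "t 1 1 6 k = card {(x,y,z). (x,y,z) \<in> S6 (8*k+8) \<and> odd x \<and> odd y \<and> odd z}"
  unfolding t_def
proof (rule card_wit[where f="\<lambda>(x,y,z). (2*x+1, 2*y+1, 2*z+1)" and g="\<lambda>(x,y,z). (x div 2, y div 2, z div 2)"])
  fix p assume "p \<in> {(x, y, z). k = 1 * (x * (x + 1) div 2) + 1 * (y * (y + 1) div 2) + 6 * (z * (z + 1) div 2)}"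
  then obtain x y z where p: "p = (x,y,z)" "k = (x * (x + 1) div 2) + (y * (y + 1) div 2) + 6 * (z * (z + 1) div 2)" by auto
  show "(\<lambda>(x,y,z). (x div 2, y div 2, z div 2)) ((\<lambda>(x,y,z). (2*x+1, 2*y+1, 2*z+1)) p) = p" using p by simp
  show "(\<lambda>(x,y,z). (2*x+1, 2*y+1, 2*z+1)) p \<in> {(x,y,z). (x,y,z) \<in> S6 (8*k+8) \<and> odd x \<and> odd y \<and> odd z}"
    using p tri[of x] tri[of y] tri[of z] by (simp add: S6_def)
next
  fix p assume "p \<in> {(x,y,z). (x,y,z) \<in> S6 (8*k+8) \<and> odd x \<and> odd y \<and> odd z}"
  then obtain x y z where p: "p = (x,y,z)" "8*k+8 = x^2+y^2+6*z^2" "odd x" "odd y" "odd z" by (auto simp: S6_def)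
  have o: "x = 2*(x div 2) + 1" "y = 2*(y div 2) + 1" "z = 2*(z div 2) + 1" using p odd_div by blast+
  have o': "2*(x div 2) + 1 = x" "2*(y div 2) + 1 = y" "2*(z div 2) + 1 = z" using o by simp_all
  define a where "a = x div 2"
  define b where "b = y div 2"
  define c where "c = z div 2"
  have qx: "x^2 = 8*(a*(a+1) div 2) + 1" using tri[of a] o(1) unfolding a_def by metis
  have qy: "y^2 = 8*(b*(b+1) div 2) + 1" using tri[of b] o(2) unfolding b_def by metis
  have qz: "z^2 = 8*(c*(c+1) div 2) + 1" using tri[of c] o(3) unfolding c_def by metis
  have key: "k = (a*(a+1) div 2) + (b*(b+1) div 2) + 6*(c*(c+1) div 2)" using p(2) qx qy qz by linarith
  show "(\<lambda>(x,y,z). (2*x+1, 2*y+1, 2*z+1)) ((\<lambda>(x,y,z). (x div 2, y div 2, z div 2)) p) = p"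
     "(\<lambda>(x,y,z). (x div 2, y div 2, z div 2)) p \<in> {(x, y, z). k = 1 * (x * (x + 1) div 2) + 1 * (y * (y + 1) div 2) + 6 * (z * (z + 1) div 2)}"
    using p(1) o' key unfolding a_def b_def c_def by simp_all
qed

lemma T3_odd: "t 1 1 3 k = C (8*k+5) (\<lambda>x y z. odd x \<and> odd y \<and> odd z)"
  unfolding t_def C_def
proof (rule card_wit[where f="\<lambda>(x,y,z). (2*x+1, 2*y+1, 2*z+1)" and g="\<lambda>(x,y,z). (x div 2, y div 2, z div 2)"])
  fix p assume "p \<in> {(x, y, z). k = 1 * (x * (x + 1) div 2) + 1 * (y * (y + 1) div 2) + 3 * (z * (z + 1) div 2)}"
  then obtain x y z where p: "p = (x,y,z)" "k = (x * (x + 1) div 2) + (y * (y + 1) div 2) + 3 * (z * (z + 1) div 2)" by auto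
  show "(\<lambda>(x,y,z). (x div 2, y div 2, z div 2)) ((\<lambda>(x,y,z). (2*x+1, 2*y+1, 2*z+1)) p) = p" using p by simp
  show "(\<lambda>(x,y,z). (2*x+1, 2*y+1, 2*z+1)) p \<in> SP (8*k+5) (\<lambda>x y z. odd x \<and> odd y \<and> odd z)"
    using p tri[of x] tri[of y] tri[of z] by (simp add: SP_def)
next
  fix p assume "p \<in> SP (8*k+5) (\<lambda>x y z. odd x \<and> odd y \<and> odd z)"
  then obtain x y z where p: "p = (x,y,z)" "8*k+5 = x^2+y^2+3*z^2" "odd x" "odd y" "odd z" by (auto simp: SP_def)
  have o: "x = 2*(x div 2) + 1" "y = 2*(y div 2) + 1" "z = 2*(z div 2) + 1" using p odd_div by blast+
  have o': "2*(x div 2) + 1 = x" "2*(y div 2) + 1 = y" "2*(z div 2) + 1 = z" using o by simp_all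
  define a where "a = x div 2"
  define b where "b = y div 2"
  define c where "c = z div 2"
  have qx: "x^2 = 8*(a*(a+1) div 2) + 1" using tri[of a] o(1) unfolding a_def by metis
  have qy: "y^2 = 8*(b*(b+1) div 2) + 1" using tri[of b] o(2) unfolding b_def by metis
  have qz: "z^2 = 8*(c*(c+1) div 2) + 1" using tri[of c] o(3) unfolding c_def by metis
  have key: "k = (a*(a+1) div 2) + (b*(b+1) div 2) + 3*(c*(c+1) div 2)" using p(2) qx qy qz by linarith
  show "(\<lambda>(x,y,z). (2*x+1, 2*y+1, 2*z+1)) ((\<lambda>(x,y,z). (x div 2, y div 2, z div 2)) p) = p"
     "(\<lambda>(x,y,z). (x div 2, y div 2, z div 2)) p \<in> {(x, y, z). k = 1 * (x * (x + 1) div 2) + 1 * (y * (y + 1) div 2) + 3 * (z * (z + 1) div 2)}"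
    using p(1) o' key unfolding a_def b_def c_def by simp_all
qed


lemma S6_fin: "finite (S6 n)"
proof -
  have a: "\<bar>u\<bar> \<le> u^2" for u :: int
  proof (cases "u = 0")
    case False
    then have "\<bar>u\<bar> * 1 \<le> \<bar>u\<bar> * \<bar>u\<bar>" by (intro mult_left_mono) auto
    then show ?thesis by (simp add: power2_eq_square abs_mult_self_eq)
  qed simp
  have "S6 n \<subseteq> {-\<bar>n\<bar>..\<bar>n\<bar>} \<times> {-\<bar>n\<bar>..\<bar>n\<bar>} \<times> {-\<bar>n\<bar>..\<bar>n\<bar>}"
  proof
    fix p assume "p \<in> S6 n"
    then obtain x y z where p: "p = (x,y,z)" "n = x^2+y^2+6*z^2" by (auto simp: S6_def)
    show "p \<in> {-\<bar>n\<bar>..\<bar>n\<bar>} \<times> {-\<bar>n\<bar>..\<bar>n\<bar>} \<times> {-\<bar>n\<bar>..\<bar>n\<bar>}"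
    proof -
      have q: "x^2 \<ge> 0" "y^2 \<ge> 0" "z^2 \<ge> 0" by simp_all
      have "\<bar>x\<bar> \<le> \<bar>n\<bar>" "\<bar>y\<bar> \<le> \<bar>n\<bar>" "\<bar>z\<bar> \<le> \<bar>n\<bar>"
        using a[of x] a[of y] a[of z] p(2) q by linarith+
      then show ?thesis using p(1) by auto
    qed
  qed
  then show ?thesis by (rule finite_subset) auto
qed

lemma cl8: "n = X+Y+6*(Z::int) \<Longrightarrow> (px \<longrightarrow> X mod 8 = 1) \<Longrightarrow> (\<not>px \<longrightarrow> X mod 4 = 0)
  \<Longrightarrow> (py \<longrightarrow> Y mod 8 = 1) \<Longrightarrow> (\<not>py \<longrightarrow> Y mod 4 = 0)
  \<Longrightarrow> (pz \<longrightarrow> Z mod 8 = 1) \<Longrightarrow> (\<not>pz \<longrightarrow> Z mod 4 = 0) \<Longrightarrow> n mod 8 = 0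
  \<Longrightarrow> (px \<and> py \<and> pz) \<or> (\<not>px \<and> \<not>py \<and> \<not>pz)"
  by (cases px; cases py; cases pz; simp; presburger)

lemma par6: "8*m = x^2+y^2+6*z^2 \<Longrightarrow> (odd x \<and> odd y \<and> odd (z::int)) \<or> (even x \<and> even y \<and> even z)"
proof -
  assume e: "8*m = x^2+y^2+6*z^2"
  have h: "odd x \<longrightarrow> x^2 mod 8 = 1" "\<not> odd x \<longrightarrow> x^2 mod 4 = 0"
    "odd y \<longrightarrow> y^2 mod 8 = 1" "\<not> odd y \<longrightarrow> y^2 mod 4 = 0"
    "odd z \<longrightarrow> z^2 mod 8 = 1" "\<not> odd z \<longrightarrow> z^2 mod 4 = 0"
    using sqf[of x] sqf[of y] sqf[of z] by auto
  have "(8*m) mod 8 = 0" by simp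
  from cl8[OF e h this] show ?thesis by simp
qed

lemma T6eq: "t 1 1 6 k + card (S (k+1)) = card (S (4*(k+1)))"
proof -
  let ?m = "k+1"
  let ?O = "{(x,y,z). (x,y,z) \<in> S6 (8*k+8) \<and> odd x \<and> odd y \<and> odd z}"
  let ?E = "{(x,y,z). (x,y,z) \<in> S6 (8*k+8) \<and> even x \<and> even y \<and> even z}"
  have U: "S6 (8*k+8) = ?O \<union> ?E"
  proof
    show "S6 (8*k+8) \<subseteq> ?O \<union> ?E"
    proof
      fix p assume "p \<in> S6 (8*k+8)"
      then obtain x y z where p: "p = (x,y,z)" "8*(k+1) = x^2+y^2+6*z^2" by (auto simp: S6_def)
      from par6[OF p(2)] show "p \<in> ?O \<union> ?E" using p by (auto simp: S6_def)
    qed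
  qed auto
  have D: "?O \<inter> ?E = {}" by auto
  have fO: "finite ?O" "finite ?E" by (rule finite_subset[OF _ S6_fin[of "8*k+8"]], auto)+
  have cE: "card ?E = card (S6 (2*?m))"
  proof (rule card_wit[where f="\<lambda>(x,y,z). (x div 2, y div 2, z div 2)" and g="\<lambda>(x,y,z). (2*x,2*y,2*z)"])
    fix p assume "p \<in> ?E"
    then obtain x y z where p: "p = (x,y,z)" "8*k+8 = x^2+y^2+6*z^2" "even x" "even y" "even z" by (auto simp: S6_def)
    then obtain a b c where "x = 2*a" "y = 2*b" "z = 2*c" by (auto elim!: evenE)
    with p show "(\<lambda>(x,y,z). (2*x,2*y,2*z)) ((\<lambda>(x,y,z). (x div 2, y div 2, z div 2)) p) = p"
      "(\<lambda>(x,y,z). (x div 2, y div 2, z div 2)) p \<in> S6 (2*?m)"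
      by (auto simp: S6_def power_mult_distrib)
  next
    fix p assume "p \<in> S6 (2*?m)"
    then obtain x y z where p: "p = (x,y,z)" "2*(k+1) = x^2+y^2+6*z^2" by (auto simp: S6_def)
    then show "(\<lambda>(x,y,z). (x div 2, y div 2, z div 2)) ((\<lambda>(x,y,z). (2*x,2*y,2*z)) p) = p"
      "(\<lambda>(x,y,z). (2*x,2*y,2*z)) p \<in> ?E"
      by (auto simp: S6_def power_mult_distrib)
  qed
  have "card (?O \<union> ?E) = card ?O + card ?E" by (rule card_Un_disjoint[OF fO(1) fO(2) D])
  moreover have "card (S6 (8*k+8)) = card (?O \<union> ?E)" by (rule arg_cong[OF U])
  ultimately have "card (S6 (8*k+8)) = card ?O + card ?E" by simp
  moreover have "card (S6 (8*k+8)) = card (S (4*?m))" using L116[of "4*?m"] by (simp add: algebra_simps)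
  moreover have "card (S6 (2*?m)) = card (S ?m)" by (rule L116)
  ultimately show ?thesis using T6_odd[of k] cE by simp
qed


lemma tM: "t 1 1 6 n = 4 * M (n+1)"
  using T6eq[of n] LN4[of "n+1"] by simp

lemma partA: "N 1 1 6 (2 * n) = N 1 1 3 n"
  using N116 L116 N113 by simp

lemma partB: "t 1 1 6 (8 * n + 4) = 2 * t 1 1 3 n"
proof -
  have m: "(8*n+5) mod 8 = 5" by presburger
  have "t 1 1 6 (8 * n + 4) = 4 * M (8*n+5)" using tM[of "8*n+4"] by (simp add: add.assoc)
  moreover have "t 1 1 3 n = 2 * M (8*n+5)" using T3_odd[of n] LM5[OF m] by simp
  ultimately show ?thesis by simp
qed

lemma partC: "t 1 1 6 (32 * n + 19) = 4 * t 1 1 3 n"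
proof -
  have m: "(8*n+5) mod 8 = 5" by presburger
  have e: "32 * n + 19 + 1 = 4 * (8*n+5)" by simp
  have "t 1 1 6 (32 * n + 19) = 4 * M (4*(8*n+5))" using tM[of "32*n+19"] e by simp
  also have "\<dots> = 8 * M (8*n+5)" using LM4[of "8*n+5"] by simp
  finally show ?thesis using T3_odd[of n] LM5[OF m] by simp
qed

lemma Q1: "n mod 4 = 1 \<or> n mod 4 = 2 \<Longrightarrow> t 1 1 6 n = 4 * N 1 1 3 (n + 1)"
proof -
  assume "n mod 4 = 1 \<or> n mod 4 = 2"
  then have "(n+1) mod 4 = 2 \<or> (n+1) mod 4 = 3" by presburger
  then show ?thesis using tM[of n] LM23 N113 by simp
qed

lemma Q2: "n mod 8 = 0 \<Longrightarrow> t 1 1 6 n = 2 * N 1 1 3 (n + 1)"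
proof -
  assume "n mod 8 = 0"
  then have "(n+1) mod 8 = 1" by presburger
  then show ?thesis using tM[of n] LM1 N113 by simp
qed

lemma Q3: "n mod 8 = 4 \<or> n mod 32 = 19 \<Longrightarrow> t 1 1 6 n = N 1 1 3 (n + 1)"
proof -
  assume h: "n mod 8 = 4 \<or> n mod 32 = 19"
  show ?thesis
  proof (cases "n mod 8 = 4")
    case True
    then have "(n+1) mod 8 = 5" by presburger
    then show ?thesis using tM[of n] LM5 N113 by simp
  next
    case False
    with h have "n mod 32 = 19" by simp
    obtain k where k: "n + 1 = 4*k" "k mod 8 = 5"
    proof -
      have "n + 1 = 4*((n+1) div 4)" "(n+1) div 4 mod 8 = 5" using \<open>n mod 32 = 19\<close> by presburger+
      then show ?thesis using that by blast
    qed
    then show ?thesis using tM[of n] LM4[of k] LN4[of k] LM5[OF k(2)] N113 by simp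
  qed
qed

lemma Q4: "n mod 16 = 7 \<or> n mod 16 = 11 \<Longrightarrow> 5 * t 1 1 6 n = 8 * N 1 1 3 (n + 1)"
proof -
  assume h: "n mod 16 = 7 \<or> n mod 16 = 11"
  obtain k where k: "n + 1 = 4*k" "k mod 4 = 2 \<or> k mod 4 = 3"
  proof -
    have "n + 1 = 4*((n+1) div 4)" "(n+1) div 4 mod 4 = 2 \<or> (n+1) div 4 mod 4 = 3" using h by presburger+
    then show ?thesis using that by blast
  qed
  then show ?thesis using tM[of n] LM4[of k] LN4[of k] LM23[OF k(2)] N113 by simp
qed

lemma Q5: "n mod 32 = 3 \<Longrightarrow> 3 * t 1 1 6 n = 4 * N 1 1 3 (n + 1)"
proof -
  assume h: "n mod 32 = 3"
  obtain k where k: "n + 1 = 4*k" "k mod 8 = 1"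
  proof -
    have "n + 1 = 4*((n+1) div 4)" "(n+1) div 4 mod 8 = 1" using h by presburger+
    then show ?thesis using that by blast
  qed
  then show ?thesis using tM[of n] LM4[of k] LN4[of k] LM1[OF k(2)] N113 by simp
qed

theorem theorem3p1:
  shows "(\<forall>n::int. n \<ge> 1 \<longrightarrow>
            N 1 1 6 (2 * n) = N 1 1 3 n \<and>
            t 1 1 6 (8 * n + 4) = 2 * t 1 1 3 n \<and>
            t 1 1 6 (32 * n + 19) = 4 * t 1 1 3 n) \<and>
         (\<forall>n::int. n \<ge> 1 \<longrightarrow> n mod 16 \<noteq> 15 \<longrightarrow>
            ((n mod 4 = 1 \<or> n mod 4 = 2) \<longrightarrow> real (t 1 1 6 n) = 4 * real (N 1 1 3 (n + 1))) \<and>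
            (n mod 8 = 0 \<longrightarrow> real (t 1 1 6 n) = 2 * real (N 1 1 3 (n + 1))) \<and>
            ((n mod 8 = 4 \<or> n mod 32 = 19) \<longrightarrow> real (t 1 1 6 n) = real (N 1 1 3 (n + 1))) \<and>
            ((n mod 16 = 7 \<or> n mod 16 = 11) \<longrightarrow> real (t 1 1 6 n) = 8 / 5 * real (N 1 1 3 (n + 1))) \<and>
            (n mod 32 = 3 \<longrightarrow> real (t 1 1 6 n) = 4 / 3 * real (N 1 1 3 (n + 1))))"
proof (intro conjI allI impI)
  fix n :: int
  show "N 1 1 6 (2 * n) = N 1 1 3 n" by (rule partA)
  show "t 1 1 6 (8 * n + 4) = 2 * t 1 1 3 n" by (rule partB)
  show "t 1 1 6 (32 * n + 19) = 4 * t 1 1 3 n" by (rule partC)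
next
  fix n :: int
  show "n mod 4 = 1 \<or> n mod 4 = 2 \<Longrightarrow> real (t 1 1 6 n) = 4 * real (N 1 1 3 (n + 1))"
    using Q1[of n] by simp
  show "n mod 8 = 0 \<Longrightarrow> real (t 1 1 6 n) = 2 * real (N 1 1 3 (n + 1))"
    using Q2[of n] by simp
  show "n mod 8 = 4 \<or> n mod 32 = 19 \<Longrightarrow> real (t 1 1 6 n) = real (N 1 1 3 (n + 1))"
    using Q3[of n] by simp
  show "n mod 16 = 7 \<or> n mod 16 = 11 \<Longrightarrow> real (t 1 1 6 n) = 8 / 5 * real (N 1 1 3 (n + 1))"
  proof -
    assume "n mod 16 = 7 \<or> n mod 16 = 11"
    from Q4[OF this] have "5 * real (t 1 1 6 n) = 8 * real (N 1 1 3 (n + 1))" by (metis of_nat_mult of_nat_numeral)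
    then show ?thesis by simp
  qed
  show "n mod 32 = 3 \<Longrightarrow> real (t 1 1 6 n) = 4 / 3 * real (N 1 1 3 (n + 1))"
  proof -
    assume "n mod 32 = 3"
    from Q5[OF this] have "3 * real (t 1 1 6 n) = 4 * real (N 1 1 3 (n + 1))" by (metis of_nat_mult of_nat_numeral)
    then show ?thesis by simp
  qed
qed

end
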